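(* Let $X\subseteq\mathbb{C}^n$ be a complex analytic set, $x\in X$, $\mathcal M\subseteq\mathcal O_{X,x}^p$ a submodule with matrix of generators $[\mathcal M]=[g_1\cdots g_r]$, and $k\in\mathbb N$. Write the matrix of generators of $\mathcal M_D$ as $$[\mathcal M_D]=\begin{bmatrix}[\mathcal M]&0\\ [\mathcal M]'&[\tilde{\mathcal M}]\end{bmatrix},$$ where the columns of $[\tilde{\mathcal M}]$ are $(z_i-z_i')g_j'$, $i=1,\dots,n$, $j=1,\dots,r$. Let $\mathcal J_{2k}(\mathcal M_D)$ be the ideal generated by $\{\det(\mathcal M_{IJ})\det(\tilde{\mathcal M}_{KL}): I,J,K,L\ k\text{-indexes}\}$. Then $\mathcal J_{2k}(\mathcal M_D)\subseteq I_\Delta^{k-1}J_2\big((J_k(\mathcal M))_D\big)$ at $(x,x)$.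
   Context: $z_1,\dots,z_n$ are coordinates on $\mathbb C^n$; $\pi_1,\pi_2:X\times X\to X$ are the projections; for an object $A$ on $X$ we write $A$ for $A\circ\pi_1$ and $A'$ for $A\circ\pi_2$. $I_\Delta=(z_1-z_1',\dots,z_n-z_n')$ is the ideal of the diagonal. For a matrix $A$ and $k$-indexes (strictly increasing tuples) $I,J$, $A_{IJ}$ is the submatrix with rows $I$ and columns $J$. For $h\in\mathcal O_X^q$, $h_D=(h\circ\pi_1,h\circ\pi_2)$, and for a submodule or ideal $N$, $N_D$ is generated by $\{h_D:h\in N\}$. $J_m(N)$ is the ideal of $m\times m$ minors of a matrix of generators of $N$. *)

theory Defs
  imports "HOL-Analysis.Analysis" "HOL-Combinatorics.Permutations"
begin

definition holo_on :: "(complex^'m) set \<Rightarrow> (complex^'m \<Rightarrow> complex) \<Rightarrow> bool" where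
  "holo_on U f \<longleftrightarrow> open U \<and>
     (\<forall>w\<in>U. \<exists>D. (f has_derivative D) (at w) \<and> (\<forall>c v. D (c *s v) = c * D v))"

definition analytic_set :: "(complex^'n) set \<Rightarrow> bool" where
  "analytic_set X \<longleftrightarrow> (\<forall>a\<in>X. \<exists>U F. a \<in> U \<and> open U \<and> finite F \<and> (\<forall>f\<in>F. holo_on U f)
       \<and> X \<inter> U = {w\<in>U. \<forall>f\<in>F. f w = 0})"

text \<open>C^{2n} = C^n x C^n with coordinates (z, z'); projections and diagonal point.\<close>
definition pr1 :: "complex^('n + 'n) \<Rightarrow> complex^'n" where
  "pr1 w = (\<chi> i. w $ Inl i)"
definition pr2 :: "complex^('n + 'n) \<Rightarrow> complex^'n" where
  "pr2 w = (\<chi> i. w $ Inr i)"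
definition dpt :: "complex^'n \<Rightarrow> complex^('n + 'n)" where
  "dpt x = (\<chi> i. case i of Inl j \<Rightarrow> x $ j | Inr j \<Rightarrow> x $ j)"
definition double :: "(complex^'n) set \<Rightarrow> (complex^('n + 'n)) set" where
  "double X = {w. pr1 w \<in> X \<and> pr2 w \<in> X}"

definition germ_ideal_mem :: "(complex^'m) set \<Rightarrow> complex^'m \<Rightarrow> (complex^'m \<Rightarrow> complex) set
     \<Rightarrow> (complex^'m \<Rightarrow> complex) \<Rightarrow> bool" where
  "germ_ideal_mem Y a G f \<longleftrightarrow> finite G \<and> (\<exists>U c. a \<in> U \<and> (\<forall>h\<in>G. holo_on U (c h)) \<and>
       (\<forall>w\<in>Y \<inter> U. f w = (\<Sum>h\<in>G. c h w * h w)))"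

text \<open>k-index: k distinct indices from S (ordering only affects the sign of a minor).\<close>
definition kindex :: "nat \<Rightarrow> 'a set \<Rightarrow> 'a list \<Rightarrow> bool" where
  "kindex k S ls \<longleftrightarrow> length ls = k \<and> distinct ls \<and> set ls \<subseteq> S"

definition minor :: "('r \<Rightarrow> 'c \<Rightarrow> 'v \<Rightarrow> complex) \<Rightarrow> 'r list \<Rightarrow> 'c list \<Rightarrow> 'v \<Rightarrow> complex" where
  "minor A rs cs w = (\<Sum>q\<in>{q. q permutes {..<length rs}}.
       of_int (sign q) * (\<Prod>i<length rs. A (rs ! i) (cs ! (q i)) w))"

definition Mtil :: "(nat \<Rightarrow> nat \<Rightarrow> complex^'n \<Rightarrow> complex) \<Rightarrow> nat \<Rightarrow> ('n \<times> nat) \<Rightarrow> complex^('n+'n) \<Rightarrow> complex" where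
  "Mtil g i lj w = (pr1 w $ fst lj - pr2 w $ fst lj) * g i (snd lj) (pr2 w)"

definition J2k_gens :: "nat \<Rightarrow> nat \<Rightarrow> nat \<Rightarrow> (nat \<Rightarrow> nat \<Rightarrow> complex^'n \<Rightarrow> complex) \<Rightarrow> (complex^('n+'n) \<Rightarrow> complex) set" where
  "J2k_gens p r k g = {(\<lambda>w. minor g I J (pr1 w) * minor (Mtil g) K L w) | I J K L.
      kindex k {..<p} I \<and> kindex k {..<r} J \<and> kindex k {..<p} K \<and> kindex k (UNIV \<times> {..<r}) L}"

definition Jk_idx :: "nat \<Rightarrow> nat \<Rightarrow> nat \<Rightarrow> (nat list \<times> nat list) set" where
  "Jk_idx p r k = {(I, J). kindex k {..<p} I \<and> kindex k {..<r} J}"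

text \<open>Matrix of generators of (J_k(M))_D: 2 rows; columns (m, m') and (0, (z_l - z_l') m').\<close>
definition JkD :: "(nat \<Rightarrow> nat \<Rightarrow> complex^'n \<Rightarrow> complex) \<Rightarrow> nat
     \<Rightarrow> ((nat list \<times> nat list) + ('n \<times> (nat list \<times> nat list))) \<Rightarrow> complex^('n+'n) \<Rightarrow> complex" where
  "JkD g rw col w =
     (case col of
        Inl c \<Rightarrow> (if rw = 0 then minor g (fst c) (snd c) (pr1 w) else minor g (fst c) (snd c) (pr2 w))
      | Inr (l, c) \<Rightarrow> (if rw = 0 then 0 else (pr1 w $ l - pr2 w $ l) * minor g (fst c) (snd c) (pr2 w)))"

definition JkD_cols :: "nat \<Rightarrow> nat \<Rightarrow> nat \<Rightarrow> ((nat list \<times> nat list) + ('n \<times> (nat list \<times> nat list))) set" where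
  "JkD_cols p r k = Inl ` Jk_idx p r k \<union> Inr ` (UNIV \<times> Jk_idx p r k)"

definition J2JkD_gens :: "nat \<Rightarrow> nat \<Rightarrow> nat \<Rightarrow> (nat \<Rightarrow> nat \<Rightarrow> complex^'n \<Rightarrow> complex) \<Rightarrow> (complex^('n+'n) \<Rightarrow> complex) set" where
  "J2JkD_gens p r k g = {minor (JkD g) rs cs | rs cs. kindex 2 {..<2} rs \<and> kindex 2 (JkD_cols p r k) cs}"

definition Idiag_pow_gens :: "nat \<Rightarrow> (complex^('n::finite+'n) \<Rightarrow> complex) set" where
  "Idiag_pow_gens m = {(\<lambda>w. \<Prod>t<m. (pr1 w $ (ls ! t) - pr2 w $ (ls ! t))) | ls :: 'n list. length ls = m}"

definition prod_gens :: "('v \<Rightarrow> complex) set \<Rightarrow> ('v \<Rightarrow> complex) set \<Rightarrow> ('v \<Rightarrow> complex) set" where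
  "prod_gens A B = {(\<lambda>w. a w * b w) | a b. a \<in> A \<and> b \<in> B}"

end

theory Submission
  imports Defs
begin

lemma minor_2: "minor A [a,b] [c,d] w = A a c w * A b d w - A a d w * A b c w"
proof -
  have f12: "finite {1::nat}" "0 \<notin> {1::nat}" by auto
  have e: "{..<length [a,b]} = insert (0::nat) {1}" by auto
  show ?thesis unfolding minor_def e
    unfolding sum_over_permutations_insert[OF f12] permutes_sing
    by (simp add: sign_swap_id lessThan_Suc)
qed

lemma minor_repeat:
  assumes ab: "a < length rs" "b < length rs" "a \<noteq> b" and eq: "cs!a = cs!b"
  shows "minor A rs cs w = 0"
proof -
  let ?N = "{..<length rs}"
  let ?t = "Transposition.transpose a b"
  let ?F = "\<lambda>q. of_int (sign q) * (\<Prod>i<length rs. A (rs ! i) (cs ! (q i)) w) :: complex"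
  have tp: "?t permutes ?N" using ab by (simp add: permutes_swap_id)
  have "minor A rs cs w = sum ?F {q. q permutes ?N}" by (simp add: minor_def)
  also have "\<dots> = sum (\<lambda>q. ?F (?t \<circ> q)) {q. q permutes ?N}"
    by (rule setum_permutations_compose_left[OF tp])
  also have "\<dots> = sum (\<lambda>q. - ?F q) {q. q permutes ?N}"
  proof (rule sum.cong[OF refl])
    fix q assume q: "q \<in> {q. q permutes ?N}"
    have s: "sign (?t \<circ> q) = - sign q"
    proof -
      have "permutation q" using q by (auto intro: permutes_imp_permutation)
      then have "sign (?t \<circ> q) = sign ?t * sign q"
        by (simp add: sign_compose permutation_swap_id)
      then show ?thesis using ab by (simp add: sign_swap_id)
    qed
    have c: "cs ! (?t j) = cs ! j" for j
      using eq by (simp add: Transposition.transpose_def)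
    show "?F (?t \<circ> q) = - ?F q" by (simp add: s c)
  qed
  also have "\<dots> = - minor A rs cs w" by (simp add: minor_def sum_negf)
  finally show ?thesis by simp
qed

lemma minor_Mtil:
  assumes "length L = length K"
  shows "minor (Mtil g) K L w = (\<Prod>t<length K. (pr1 w $ fst (L!t) - pr2 w $ fst (L!t)))
           * minor g K (map snd L) (pr2 w)"
proof -
  let ?N = "{..<length K}"
  let ?d = "\<lambda>t. pr1 w $ fst (L!t) - pr2 w $ fst (L!t)"
  have "minor (Mtil g) K L w = (\<Sum>q\<in>{q. q permutes ?N}. (\<Prod>t\<in>?N. ?d t) * (of_int (sign q) *
      (\<Prod>i\<in>?N. g (K!i) (map snd L ! q i) (pr2 w))))"
    unfolding minor_def
  proof (rule sum.cong[OF refl])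
    fix q assume q: "q \<in> {q. q permutes ?N}"
    then have qp: "q permutes ?N" by simp
    have 0: "(\<Prod>i\<in>?N. Mtil g (K ! i) (L ! q i) w) = (\<Prod>i\<in>?N. ?d (q i) * g (K!i) (snd (L ! q i)) (pr2 w))"
      unfolding Mtil_def by (rule prod.cong) (rule refl, rule refl)
    have 1: "(\<Prod>i\<in>?N. ?d (q i)) = (\<Prod>t\<in>?N. ?d t)"
      using prod.permute[OF qp, of ?d] unfolding o_def by (rule sym)
    have 2: "(\<Prod>i\<in>?N. g (K!i) (snd (L ! q i)) (pr2 w)) = (\<Prod>i\<in>?N. g (K!i) (map snd L ! q i) (pr2 w))"
    proof (rule prod.cong[OF refl])
      fix i assume "i \<in> ?N"
      then have "q i < length L" using permutes_in_image[OF qp] assms by simp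
      then show "g (K!i) (snd (L ! q i)) (pr2 w) = g (K!i) (map snd L ! q i) (pr2 w)" by simp
    qed
    show "of_int (sign q) * (\<Prod>i<length K. Mtil g (K ! i) (L ! q i) w) =
      (\<Prod>t\<in>?N. ?d t) * (of_int (sign q) * (\<Prod>i\<in>?N. g (K!i) (map snd L ! q i) (pr2 w)))"
      unfolding 0 prod.distrib 1 2 by (simp only: mult_ac)
  qed
  also have "\<dots> = (\<Prod>t\<in>?N. ?d t) * minor g K (map snd L) (pr2 w)"
    by (simp only: minor_def sum_distrib_left length_map assms)
  finally show ?thesis .
qed

lemma holo_const: "holo_on UNIV (\<lambda>w. c)"
  unfolding holo_on_def by (auto intro!: exI[of _ "\<lambda>v. 0"] has_derivative_const)

lemma finite_kindex: "finite S \<Longrightarrow> finite {ls. kindex k S ls}"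
  unfolding kindex_def
  by (rule finite_subset[OF _ finite_lists_length_eq[of S k]]) auto

lemma finite_G:
  "finite (prod_gens (Idiag_pow_gens m :: (complex^('n::finite+'n) \<Rightarrow> complex) set) (J2JkD_gens p r k g))"
proof -
  have f1: "finite (Idiag_pow_gens m :: (complex^('n+'n) \<Rightarrow> complex) set)"
  proof -
    have "finite {ls :: 'n list. set ls \<subseteq> UNIV \<and> length ls = m}"
      by (rule finite_lists_length_eq) simp
    then have "finite ((\<lambda>ls. (\<lambda>w::complex^('n+'n). \<Prod>t<m. (pr1 w $ (ls ! t) - pr2 w $ (ls ! t))))
        ` {ls :: 'n list. set ls \<subseteq> UNIV \<and> length ls = m})" by simp
    moreover have "Idiag_pow_gens m \<subseteq> (\<lambda>ls. (\<lambda>w::complex^('n+'n). \<Prod>t<m. (pr1 w $ (ls ! t) - pr2 w $ (ls ! t))))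
        ` {ls :: 'n list. set ls \<subseteq> UNIV \<and> length ls = m}"
      unfolding Idiag_pow_gens_def by auto
    ultimately show ?thesis by (rule finite_subset[rotated])
  qed
  have fJ: "finite (Jk_idx p r k)"
    by (rule finite_subset[OF _ finite_cartesian_product[OF finite_kindex[of "{..<p}" k] finite_kindex[of "{..<r}" k]]])
       (auto simp: Jk_idx_def)
  have fC: "finite (JkD_cols p r k :: ((nat list \<times> nat list) + ('n \<times> (nat list \<times> nat list))) set)"
    unfolding JkD_cols_def using fJ by simp
  have f2: "finite (J2JkD_gens p r k g :: (complex^('n+'n) \<Rightarrow> complex) set)"
  proof -
    have "J2JkD_gens p r k g \<subseteq> (\<lambda>(rs,cs). minor (JkD g) rs cs) ` ({rs. kindex 2 {..<2} rs} \<times> {cs. kindex 2 (JkD_cols p r k) cs})"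
      unfolding J2JkD_gens_def by auto
    moreover have "finite ({rs. kindex 2 {..<2::nat} rs} \<times> {cs. kindex 2 (JkD_cols p r k :: ((nat list \<times> nat list) + ('n \<times> (nat list \<times> nat list))) set) cs})"
      using finite_kindex[OF fC] finite_kindex[of "{..<2::nat}"] by simp
    ultimately show ?thesis by (meson finite_imageI finite_subset)
  qed
  have "prod_gens (Idiag_pow_gens m) (J2JkD_gens p r k g) \<subseteq> (\<lambda>(a,b). (\<lambda>w. a w * b w)) ` (Idiag_pow_gens m \<times> J2JkD_gens p r k g)"
    unfolding prod_gens_def by auto
  then show ?thesis by (rule finite_subset) (intro finite_imageI finite_cartesian_product f1 f2)
qed

lemma mem_single:
  assumes "finite G" "h0 \<in> G" "\<And>w. f w = h0 w"
  shows "germ_ideal_mem Y a G f"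
  unfolding germ_ideal_mem_def
proof (intro conjI exI[of _ UNIV] exI[of _ "\<lambda>h w. if h = h0 then 1 else 0"])
  show "\<forall>w\<in>Y \<inter> UNIV. f w = (\<Sum>h\<in>G. (if h = h0 then 1 else 0) * h w)"
  proof
    fix w assume "w \<in> Y \<inter> UNIV"
    have "(\<Sum>h\<in>G. (if h = h0 then 1 else 0) * h w) = (\<Sum>h\<in>G. if h0 = h then h0 w else 0)"
      by (rule sum.cong) auto
    also have "\<dots> = h0 w" using assms(1,2) by simp
    finally show "f w = (\<Sum>h\<in>G. (if h = h0 then 1 else 0) * h w)" using assms(3) by simp
  qed
qed (use assms holo_const in auto)

lemma mem_zero:
  assumes "finite G" "\<And>w. f w = 0"
  shows "germ_ideal_mem Y a G f"
  unfolding germ_ideal_mem_def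
  by (intro conjI exI[of _ UNIV] exI[of _ "\<lambda>h w. 0"]) (use assms holo_const in auto)

theorem mainTheorem12:
  fixes X :: "(complex^'n) set" and x :: "complex^'n" and p r k :: nat
    and g :: "nat \<Rightarrow> nat \<Rightarrow> complex^'n \<Rightarrow> complex"
  assumes "analytic_set X" and "x \<in> X"
    and "\<exists>U. x \<in> U \<and> (\<forall>i<p. \<forall>j<r. holo_on U (g i j))"
    and "k \<ge> 1"
  shows "\<forall>f\<in>J2k_gens p r k g.
           germ_ideal_mem (double X) (dpt x)
             (prod_gens (Idiag_pow_gens (k - 1)) (J2JkD_gens p r k g)) f"
proof
  fix f assume "f \<in> J2k_gens p r k g"
  then obtain I J K L where f: "f = (\<lambda>w. minor g I J (pr1 w) * minor (Mtil g) K L w)"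
    and kI: "kindex k {..<p} I" and kJ: "kindex k {..<r} J" and kK: "kindex k {..<p} K"
    and kL: "kindex k (UNIV \<times> {..<r}) L"
    unfolding J2k_gens_def by blast
  let ?G = "prod_gens (Idiag_pow_gens (k - 1)) (J2JkD_gens p r k g) :: (complex^('n+'n) \<Rightarrow> complex) set"
  have finG: "finite ?G" by (rule finite_G)
  define J' where "J' = map snd L"
  have lenL: "length L = k" and lenK: "length K = k" and lenJ': "length J' = k"
    using kL kK by (auto simp: kindex_def J'_def)
  have k1: "k = Suc (k - 1)" using assms(4) by simp
  let ?d = "\<lambda>w t. pr1 w $ fst (L!t) - pr2 w $ fst (L!t)"
  have fw: "f w = (\<Prod>t<k-1. ?d w t) * (minor g I J (pr1 w) * (?d w (k-1) * minor g K J' (pr2 w)))" for w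
  proof -
    have "f w = minor g I J (pr1 w) * ((\<Prod>t<k. ?d w t) * minor g K J' (pr2 w))"
      unfolding f J'_def using minor_Mtil[of L K g w] lenL lenK by simp
    also have "(\<Prod>t<k. ?d w t) = (\<Prod>t<k-1. ?d w t) * ?d w (k-1)"
      by (subst k1, subst prod.lessThan_Suc) simp
    finally show ?thesis by (simp only: mult_ac)
  qed
  show "germ_ideal_mem (double X) (dpt x) ?G f"
  proof (cases "distinct J'")
    case True
    define ls where "ls = take (k-1) (map fst L)"
    define l where "l = fst (L!(k-1))"
    define h0 where "h0 = (\<lambda>w::complex^('n+'n). (\<lambda>w. \<Prod>t<k-1. (pr1 w $ (ls ! t) - pr2 w $ (ls ! t))) w *
         minor (JkD g) [0,1] [Inl (I,J), Inr (l,(K,J'))] w)"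
    have IJ: "(I,J) \<in> Jk_idx p r k" using kI kJ by (simp add: Jk_idx_def)
    have KJ: "(K,J') \<in> Jk_idx p r k"
      using kK kL True unfolding Jk_idx_def kindex_def J'_def by auto
    have "h0 \<in> ?G"
      unfolding prod_gens_def h0_def
    proof (intro CollectI exI conjI)
      show "(\<lambda>w. \<Prod>t<k-1. (pr1 w $ (ls ! t) - pr2 w $ (ls ! t))) \<in> (Idiag_pow_gens (k-1) :: (complex^('n+'n) \<Rightarrow> complex) set)"
        unfolding Idiag_pow_gens_def by (intro CollectI exI[of _ ls] conjI refl) (simp add: ls_def lenL)
      show "minor (JkD g) [0::nat,1] [Inl (I,J), Inr (l,(K,J'))] \<in> J2JkD_gens p r k g"
        unfolding J2JkD_gens_def
        by (intro CollectI exI conjI refl) (use IJ KJ in \<open>auto simp: kindex_def JkD_cols_def\<close>)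
    qed (rule refl)
    moreover have "f w = h0 w" for w
    proof -
      have "(\<Prod>t<k-1. (pr1 w $ (ls ! t) - pr2 w $ (ls ! t))) = (\<Prod>t<k-1. ?d w t)"
        by (rule prod.cong) (auto simp: ls_def lenL)
      moreover have "minor (JkD g) [0::nat,1] [Inl (I,J), Inr (l,(K,J'))] w
          = minor g I J (pr1 w) * (?d w (k-1) * minor g K J' (pr2 w))"
        unfolding minor_2 by (simp add: JkD_def l_def)
      ultimately show ?thesis unfolding fw h0_def by simp
    qed
    ultimately show ?thesis using finG by (intro mem_single) auto
  next
    case False
    then obtain a b where ab: "a < length J'" "b < length J'" "a \<noteq> b" "J'!a = J'!b"
      by (auto simp: distinct_conv_nth)
    have m0: "minor g K J' v = 0" for v
      by (rule minor_repeat[of a K b J']) (use ab lenK lenJ' in auto)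
    have z: "f w = 0" for w
      using fw[of w] m0[of "pr2 w"] by simp
    show ?thesis using finG z by (rule mem_zero)
  qed
qed

end
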